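(* There exists an infinite word $w$ over the alphabet $\{0,1,2\}$ such that $w^{0\cup1}$, $w^{0\cup2}$ and $w^{1\cup2}$ are all weak abelian periodic, while $w$ itself is not weak abelian periodic.
   Context: For an infinite word $w$ over an alphabet $\Sigma$ and distinct letters $a,b\in\Sigma$, $w^{a\cup b}$ denotes the image of $w$ under the letter-to-letter morphism sending $b\mapsto a$ and $x\mapsto x$ for every $x\neq b$ (i.e. the letters $a$ and $b$ are identified). For a finite word $u$, $|u|_a$ is the number of occurrences of $a$ in $u$ and $\rho_a(u)=|u|_a/|u|$ for nonempty $u$. An infinite word $w$ over $\Sigma$ is weak abelian periodic if $w=v_0v_1v_2\cdots$ with $v_0$ finite and $v_1,v_2,\dots$ nonempty finite words such that $\rho_a(v_i)=\rho_a(v_j)$ for all $a\in\Sigma$ and all $i,j\ge1$. *)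

theory Defs
  imports Complex_Main
begin

definition letter_count :: "(nat \<Rightarrow> 'a) \<Rightarrow> 'a \<Rightarrow> nat \<Rightarrow> nat \<Rightarrow> nat" where
  "letter_count w a m n = card {k. m \<le> k \<and> k < n \<and> w k = a}"

definition density :: "(nat \<Rightarrow> 'a) \<Rightarrow> 'a \<Rightarrow> nat \<Rightarrow> nat \<Rightarrow> real" where
  "density w a m n = real (letter_count w a m n) / real (n - m)"

text \<open>w = v0 v1 v2 ... with cut points p 0 < p 1 < ...; v0 = w[0..p 0),
  v (i+1) = w[p i .. p (i+1)) nonempty; all blocks v1, v2, ... have equal letter densities.\<close>
definition weak_abelian_periodic :: "(nat \<Rightarrow> 'a) \<Rightarrow> bool" where
  "weak_abelian_periodic w \<longleftrightarrow>
     (\<exists>p :: nat \<Rightarrow> nat. strict_mono p \<and>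
        (\<forall>a i j. density w a (p i) (p (Suc i)) = density w a (p j) (p (Suc j))))"

definition identify :: "'a \<Rightarrow> 'a \<Rightarrow> (nat \<Rightarrow> 'a) \<Rightarrow> (nat \<Rightarrow> 'a)" where
  "identify a b w = (\<lambda>k. if w k = b then a else w k)"

end

theory Submission
  imports Defs "HOL-Library.Infinite_Set"
begin

lemma lc_split:
  assumes "m \<le> n" "n \<le> q"
  shows "letter_count w a m q = letter_count w a m n + letter_count w a n q"
proof -
  define A where "A = {k. m \<le> k \<and> k < n \<and> w k = a}"
  define B where "B = {k. n \<le> k \<and> k < q \<and> w k = a}"
  have U: "{k. m \<le> k \<and> k < q \<and> w k = a} = A \<union> B"
    using assms unfolding A_def B_def by auto
  have fA: "finite A" unfolding A_def by (rule finite_subset[of _ "{..<n}"]) auto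
  have fB: "finite B" unfolding B_def by (rule finite_subset[of _ "{..<q}"]) auto
  have d: "A \<inter> B = {}" unfolding A_def B_def by auto
  have "card (A \<union> B) = card A + card B" using card_Un_disjoint[OF fA fB d] .
  then show ?thesis unfolding letter_count_def U A_def B_def .
qed

lemma lc_single: "letter_count w a n (Suc n) = (if w n = a then 1 else 0)"
proof (cases "w n = a")
  case True
  have "{k. n \<le> k \<and> k < Suc n \<and> w k = a} = {n}" using True by (auto simp: le_less_Suc_eq)
  then show ?thesis unfolding letter_count_def using True by simp
next
  case False
  have "{k. n \<le> k \<and> k < Suc n \<and> w k = a} = {}" using False by (auto simp: le_less_Suc_eq)
  then show ?thesis unfolding letter_count_def using False by simp
qed

lemma lc_Suc:
  assumes "m \<le> n"
  shows "letter_count w a m (Suc n) = letter_count w a m n + (if w n = a then 1 else 0)"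
  using lc_split[OF assms, of "Suc n" w a] lc_single[of w a n] by simp

lemma lc_le: "letter_count w a m n \<le> n - m"
proof -
  have "{k. m \<le> k \<and> k < n \<and> w k = a} \<subseteq> {m..<n}" by auto
  then have "card {k. m \<le> k \<and> k < n \<and> w k = a} \<le> card {m..<n}"
    by (intro card_mono) auto
  then show ?thesis unfolding letter_count_def by simp
qed

lemma lc_zero: "(\<And>k. m \<le> k \<Longrightarrow> k < n \<Longrightarrow> w k \<noteq> a) \<Longrightarrow> letter_count w a m n = 0"
proof -
  assume h: "\<And>k. m \<le> k \<Longrightarrow> k < n \<Longrightarrow> w k \<noteq> a"
  have "{k. m \<le> k \<and> k < n \<and> w k = a} = {}" using h by blast
  then show ?thesis unfolding letter_count_def by simp
qed

lemma lc_full: "(\<And>k. m \<le> k \<Longrightarrow> k < n \<Longrightarrow> w k = a) \<Longrightarrow> letter_count w a m n = n - m"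
proof -
  assume h: "\<And>k. m \<le> k \<Longrightarrow> k < n \<Longrightarrow> w k = a"
  have "{k. m \<le> k \<and> k < n \<and> w k = a} = {m..<n}"
  proof (rule set_eqI)
    fix k show "k \<in> {k. m \<le> k \<and> k < n \<and> w k = a} \<longleftrightarrow> k \<in> {m..<n}"
      using h[of k] by (simp only: mem_Collect_eq atLeastLessThan_iff) blast
  qed
  then show ?thesis unfolding letter_count_def by simp
qed

lemma lc_compl:
  assumes "\<forall>k. u k = x \<or> u k = z" "x \<noteq> z"
  shows "letter_count u x m n + letter_count u z m n = n - m"
proof -
  define A where "A = {k. m \<le> k \<and> k < n \<and> u k = x}"
  define B where "B = {k. m \<le> k \<and> k < n \<and> u k = z}"
  have U: "{m..<n} = A \<union> B" using assms unfolding A_def B_def by auto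
  have fA: "finite A" unfolding A_def by (rule finite_subset[of _ "{..<n}"]) auto
  have fB: "finite B" unfolding B_def by (rule finite_subset[of _ "{..<n}"]) auto
  have d: "A \<inter> B = {}" using assms(2) unfolding A_def B_def by auto
  have "card (A \<union> B) = card A + card B" using card_Un_disjoint[OF fA fB d] .
  then have "card A + card B = n - m" using U by (metis card_atLeastLessThan)
  then show ?thesis unfolding letter_count_def A_def B_def .
qed

lemma half: "2 * c = d \<Longrightarrow> d > 0 \<Longrightarrow> real c / real d = 1/2"
  by (simp add: field_simps)

lemma binary_wap:
  assumes vals: "\<forall>k. u k = x \<or> u k = z" and xz: "x \<noteq> z"
    and inf: "infinite {n. 2 * letter_count u z 0 n = n}"
  shows "weak_abelian_periodic u"
proof -
  define S where "S = {n. 2 * letter_count u z 0 n = n}"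
  define p where "p = enumerate S"
  have infS: "infinite S" using inf unfolding S_def .
  have sm: "strict_mono p" unfolding p_def strict_mono_Suc_iff
    using enumerate_step[OF infS] by blast
  define g where "g = (\<lambda>a. if a = x \<or> a = z then 1/2 else (0::real))"
  have blk: "density u a (p i) (p (Suc i)) = g a" for a i
  proof -
    let ?m = "p i" and ?n = "p (Suc i)"
    have mn: "?m < ?n" using sm by (simp add: strict_mono_def)
    have "?m \<in> S" "?n \<in> S" unfolding p_def using enumerate_in_set[OF infS] by blast+
    then have e1: "2 * letter_count u z 0 ?m = ?m" and e2: "2 * letter_count u z 0 ?n = ?n"
      unfolding S_def by auto
    have "letter_count u z 0 ?n = letter_count u z 0 ?m + letter_count u z ?m ?n"
      using lc_split[of 0 ?m ?n] mn by simp
    then have ez: "2 * letter_count u z ?m ?n = ?n - ?m" using e1 e2 by linarith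
    have ex: "2 * letter_count u x ?m ?n = ?n - ?m"
      using lc_compl[OF vals xz, of ?m ?n] ez by linarith
    show ?thesis
    proof (cases "a = x \<or> a = z")
      case True
      then have "2 * letter_count u a ?m ?n = ?n - ?m" using ex ez by auto
      then have "real (letter_count u a ?m ?n) / real (?n - ?m) = 1/2"
        by (rule half) (use mn in auto)
      then have "density u a ?m ?n = 1/2" unfolding density_def .
      with True show ?thesis unfolding g_def by simp
    next
      case False
      then have "letter_count u a ?m ?n = 0" using vals by (intro lc_zero) force
      then show ?thesis unfolding density_def g_def using False by simp
    qed
  qed
  show ?thesis unfolding weak_abelian_periodic_def
    by (rule exI[of _ p]) (simp add: sm blk)
qed


lemma lc_mono:
  assumes "m \<le> m'" "m' \<le> n'" "n' \<le> n"
  shows "letter_count w a m' n' \<le> letter_count w a m n"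
proof -
  have "letter_count w a m n = letter_count w a m m' + letter_count w a m' n"
    using lc_split[of m m' n] assms by simp
  moreover have "letter_count w a m' n = letter_count w a m' n' + letter_count w a n' n"
    using lc_split[of m' n' n] assms by simp
  ultimately show ?thesis by simp
qed

lemma lc_identify:
  assumes "z \<noteq> x" "z \<noteq> y"
  shows "letter_count (identify x y w) z m n = letter_count w z m n"
proof -
  have "\<And>k. (identify x y w k = z) \<longleftrightarrow> (w k = z)"
    using assms unfolding identify_def by auto
  then show ?thesis unfolding letter_count_def by simp
qed

lemma divt:
  fixes f :: "nat \<Rightarrow> int"
  assumes st: "\<forall>n. \<bar>f (Suc n) - f n\<bar> \<le> 1" and fa: "f a \<le> 0"
  shows "a \<le> b \<Longrightarrow> 0 \<le> f b \<Longrightarrow> \<exists>n. a \<le> n \<and> n \<le> b \<and> f n = 0"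
proof (induction b)
  case 0
  then show ?case using fa by auto
next
  case (Suc b)
  show ?case
  proof (cases "a \<le> b")
    case True
    show ?thesis
    proof (cases "0 \<le> f b")
      case True
      then show ?thesis using Suc.IH \<open>a \<le> b\<close> by force
    next
      case False
      have "\<bar>f (Suc b) - f b\<bar> \<le> 1" using st by blast
      then have "f (Suc b) = 0" using False Suc.prems by linarith
      then show ?thesis using Suc.prems by blast
    qed
  next
    case False
    then have "a = Suc b" using Suc.prems by simp
    then show ?thesis using fa Suc.prems by auto
  qed
qed

definition idx :: "nat \<Rightarrow> nat" where "idx n = (LEAST k. n < (fact (Suc k) :: nat))"
definition ww :: "nat \<Rightarrow> nat" where "ww n = idx n mod 3"

lemma idx_lt: "n < (fact (Suc (idx n)) :: nat)"
proof -
  have "Suc n \<le> (fact (Suc n) :: nat)" by (rule fact_ge_self)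
  then have "n < (fact (Suc n) :: nat)" by simp
  then show ?thesis unfolding idx_def by (rule LeastI)
qed

lemma idx_ge: "(fact K :: nat) \<le> n \<Longrightarrow> K \<le> idx n"
proof (rule ccontr)
  assume a: "fact K \<le> n" "\<not> K \<le> idx n"
  then have "Suc (idx n) \<le> K" by simp
  then have "(fact (Suc (idx n)) :: nat) \<le> fact K" by (rule fact_mono_nat)
  then show False using a idx_lt[of n] by simp
qed

lemma idx_le: "1 \<le> idx n \<Longrightarrow> (fact (idx n) :: nat) \<le> n"
proof -
  assume "1 \<le> idx n"
  then obtain j where j: "idx n = Suc j" by (cases "idx n") auto
  then have "j < (LEAST k. n < (fact (Suc k) :: nat))" unfolding idx_def by simp
  then have "\<not> n < (fact (Suc j) :: nat)" by (rule not_less_Least)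
  then show ?thesis using j by simp
qed

lemma idx_eq:
  assumes "1 \<le> k" "(fact k :: nat) \<le> n" "n < fact (Suc k)"
  shows "idx n = k"
proof -
  have "k \<le> idx n" using idx_ge assms(2) by blast
  moreover have "idx n \<le> k"
  proof (rule ccontr)
    assume "\<not> idx n \<le> k"
    then have "Suc k \<le> idx n" by simp
    then have "(fact (Suc k) :: nat) \<le> fact (idx n)" by (rule fact_mono_nat)
    moreover have "fact (idx n) \<le> n" using idx_le \<open>Suc k \<le> idx n\<close> by simp
    ultimately show False using assms(3) by simp
  qed
  ultimately show ?thesis by simp
qed

lemma ww_on: "1 \<le> k \<Longrightarrow> (fact k :: nat) \<le> n \<Longrightarrow> n < fact (Suc k) \<Longrightarrow> ww n = k mod 3"
  unfolding ww_def using idx_eq by simp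

lemma fact_lt_Suc: "1 \<le> k \<Longrightarrow> (fact k :: nat) < fact (Suc k)"
proof -
  assume "1 \<le> k"
  have "(fact k :: nat) > 0" by simp
  then show ?thesis using \<open>1 \<le> k\<close> by simp
qed

lemma int_full:
  assumes "1 \<le> k" "k mod 3 = z"
  shows "letter_count ww z (fact k) (fact (Suc k)) = fact (Suc k) - fact k"
  by (rule lc_full) (use ww_on assms in auto)

lemma int_zero:
  assumes "1 \<le> k" "k mod 3 \<noteq> z"
  shows "letter_count ww z (fact k) (fact (Suc k)) = 0"
  by (rule lc_zero) (use ww_on assms in auto)

lemma ww_vals: "ww k < 3" unfolding ww_def by simp

lemma S_inf:
  assumes "z < 3"
  shows "infinite {n. 2 * letter_count ww z 0 n = n}"
  unfolding infinite_nat_iff_unbounded_le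
proof
  fix m
  define f where "f = (\<lambda>n. 2 * int (letter_count ww z 0 n) - int n)"
  have st: "\<forall>n. \<bar>f (Suc n) - f n\<bar> \<le> 1"
    unfolding f_def using lc_Suc[of 0 _ ww z] by simp
  define k1 where "k1 = 3 * (m + 1) + (z + 1) mod 3"
  define k2 where "k2 = 3 * (m + 2) + z"
  have k1: "1 \<le> k1" "k1 mod 3 \<noteq> z" using assms unfolding k1_def by presburger+
  have k2: "1 \<le> k2" "k2 mod 3 = z" "k1 < k2" using assms unfolding k1_def k2_def by presburger+
  define a where "a = (fact (Suc k1) :: nat)"
  define b where "b = (fact (Suc k2) :: nat)"
  have ca: "letter_count ww z 0 a = letter_count ww z 0 (fact k1)"
    using lc_split[of 0 "fact k1" "fact (Suc k1)" ww z] int_zero[OF k1] fact_mono_nat[of k1 "Suc k1"]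
    unfolding a_def by simp
  have "letter_count ww z 0 (fact k1) \<le> fact k1" using lc_le[of ww z 0 "fact k1"] by simp
  moreover have "2 * (fact k1 :: nat) \<le> fact (Suc k1)" using k1(1) by simp
  ultimately have "2 * letter_count ww z 0 a \<le> a" using ca a_def by linarith
  then have fa: "f a \<le> 0" unfolding f_def by linarith
  have "letter_count ww z (fact k2) (fact (Suc k2)) \<le> letter_count ww z 0 b"
    unfolding b_def by (rule lc_mono) (use fact_mono_nat[of k2 "Suc k2"] in auto)
  then have "fact (Suc k2) - fact k2 \<le> letter_count ww z 0 b" using int_full[OF k2(1,2)] by simp
  moreover have "2 * (fact k2 :: nat) \<le> fact (Suc k2)" using k2(1) by simp
  ultimately have "b \<le> 2 * letter_count ww z 0 b" unfolding b_def by linarith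
  then have fb: "0 \<le> f b" unfolding f_def by linarith
  have ab: "a \<le> b" unfolding a_def b_def using k2(3) by (intro fact_mono_nat) simp
  obtain n where n: "a \<le> n" "n \<le> b" "f n = 0" using divt[OF st fa ab fb] by blast
  have "Suc k1 \<le> (fact (Suc k1) :: nat)" by (rule fact_ge_self)
  moreover have "m < k1" unfolding k1_def by simp
  ultimately have "m < a" unfolding a_def by linarith
  then have "m \<le> n" using n by simp
  moreover have "2 * letter_count ww z 0 n = n" using n(3) unfolding f_def by linarith
  ultimately show "\<exists>n\<ge>m. n \<in> {n. 2 * letter_count ww z 0 n = n}" by blast
qed


lemma ww_not_wap: "\<not> weak_abelian_periodic ww"
proof
  assume "weak_abelian_periodic ww"
  then obtain p where sm: "strict_mono p"
    and H: "\<And>a i j. density ww a (p i) (p (Suc i)) = density ww a (p j) (p (Suc j))"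
    unfolding weak_abelian_periodic_def by blast
  define r where "r = (\<lambda>a. density ww a (p 0) (p 1))"
  have pm: "p i \<le> p j" if "i \<le> j" for i j using sm that by (simp add: strict_mono_less_eq)
  have pS: "p i < p (Suc i)" for i using sm by (simp add: strict_mono_def)
  have L: "real (letter_count ww a (p 0) (p i)) = r a * real (p i - p 0)" for a i
  proof (induction i)
    case 0
    have "letter_count ww a (p 0) (p 0) = 0" using lc_le[of ww a "p 0" "p 0"] by simp
    then show ?case by simp
  next
    case (Suc i)
    have sp: "letter_count ww a (p 0) (p (Suc i)) = letter_count ww a (p 0) (p i) + letter_count ww a (p i) (p (Suc i))"
      using lc_split[of "p 0" "p i" "p (Suc i)"] pm[of 0 i] pS[of i] by simp
    have "density ww a (p i) (p (Suc i)) = r a" unfolding r_def using H[of a i 0] by simp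
    then have "real (letter_count ww a (p i) (p (Suc i))) = r a * real (p (Suc i) - p i)"
      unfolding density_def using pS[of i] by (simp add: field_simps)
    moreover have "real (p (Suc i) - p 0) = real (p (Suc i) - p i) + real (p i - p 0)"
      using pm[of 0 i] pS[of i] by simp
    ultimately show ?case using sp Suc.IH by (simp add: algebra_simps)
  qed
  have pge: "i \<le> p i" for i using sm by (rule seq_suble)
  have pos: "r e > 0" if "e < 3" for e
  proof -
    define k where "k = 3 * (p 0 + 1) + e"
    have k1: "1 \<le> k" "k mod 3 = e" using that unfolding k_def by presburger+
    have "k \<le> (fact k :: nat)" by (rule fact_ge_self)
    moreover have "p 0 \<le> k" unfolding k_def by simp
    ultimately have p0k: "p 0 \<le> fact k" by linarith
    define i where "i = (fact (Suc k) :: nat)"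
    have "fact (Suc k) \<le> p i" using pge[of i] unfolding i_def by simp
    then have "letter_count ww e (fact k) (fact (Suc k)) \<le> letter_count ww e (p 0) (p i)"
      using p0k fact_mono_nat[of k "Suc k"] by (intro lc_mono) auto
    moreover have "letter_count ww e (fact k) (fact (Suc k)) = fact (Suc k) - fact k"
      using int_full[OF k1] .
    moreover have "(fact k :: nat) < fact (Suc k)" using fact_lt_Suc[OF k1(1)] .
    ultimately have "1 \<le> letter_count ww e (p 0) (p i)" by linarith
    then have "1 \<le> r e * real (p i - p 0)" using L[of e i] by linarith
    moreover have "real (p i - p 0) \<ge> 0" by simp
    ultimately show ?thesis
      by (metis mult_nonpos_nonneg not_le not_one_le_zero order_trans)
  qed
  define K0 where "K0 = nat \<lceil>2 / r 0 + 2 / r 1 + 2 / r 2\<rceil> + 2"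
  define i where "i = (fact K0 :: nat) + 2 * p 0"
  define P where "P = p i"
  have P1: "fact K0 \<le> P" "2 * p 0 \<le> P" using pge[of i] unfolding P_def i_def by auto
  define k where "k = idx P"
  have kK: "K0 \<le> k" unfolding k_def using idx_ge P1(1) by blast
  have k2: "2 \<le> k" using kK unfolding K0_def by simp
  have fk: "fact k \<le> P" unfolding k_def using idx_le k2 k_def by simp
  have Pk: "P < fact (Suc k)" unfolding k_def by (rule idx_lt)
  obtain j where j: "k = Suc j" using k2 by (cases k) auto
  have j1: "1 \<le> j" using k2 j by simp
  define e where "e = (k + 1) mod 3"
  have e3: "e < 3" unfolding e_def by simp
  have fjk: "(fact j :: nat) \<le> fact k" using j by (intro fact_mono_nat) simp
  have z: "letter_count ww e (fact j) P = 0"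
  proof (rule lc_zero)
    fix q assume q: "fact j \<le> q" "q < P"
    show "ww q \<noteq> e"
    proof (cases "q < fact (Suc j)")
      case True
      then have "ww q = j mod 3" using ww_on[OF j1 q(1)] by simp
      then show ?thesis unfolding e_def j by presburger
    next
      case False
      then have "ww q = k mod 3" using ww_on[of k q] j k2 q(2) Pk by simp
      then show ?thesis unfolding e_def by presburger
    qed
  qed
  have "letter_count ww e 0 P = letter_count ww e 0 (fact j) + letter_count ww e (fact j) P"
    using lc_split[of 0 "fact j" P] fjk fk by simp
  moreover have "letter_count ww e 0 (fact j) \<le> fact j" using lc_le[of ww e 0 "fact j"] by simp
  moreover have "letter_count ww e (p 0) P \<le> letter_count ww e 0 P"
    using P1 by (intro lc_mono) auto
  ultimately have ce: "letter_count ww e (p 0) P \<le> fact j" using z by linarith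
  define R where "R = real (P - p 0)"
  have A: "r e * R \<le> real (fact j)" using L[of e i] ce unfolding R_def P_def
    by (metis of_nat_le_iff)
  have "k * fact j = (fact k :: nat)" using j by simp
  then have B: "real k * real (fact j) \<le> real P" using fk by (metis of_nat_le_iff of_nat_mult)
  have C: "real P \<le> 2 * R" unfolding R_def using P1(2) by simp
  have "fact K0 \<ge> (1::nat)" by simp
  then have "p 0 < P" using P1 by linarith
  then have Rpos: "R > 0" unfolding R_def by simp
  have rp: "r 0 > 0" "r 1 > 0" "r 2 > 0" using pos by auto
  have "2 / r e \<le> 2 / r 0 + 2 / r 1 + 2 / r 2"
  proof -
    have d: "2 / r 0 > 0" "2 / r 1 > 0" "2 / r 2 > 0" using rp by auto
    have "e = 0 \<or> e = 1 \<or> e = 2" using e3 by auto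
    then show ?thesis using d by auto
  qed
  also have "\<dots> < real K0" unfolding K0_def by linarith
  also have "\<dots> \<le> real k" using kK by simp
  finally have "2 / r e < real k" .
  then have D: "2 < r e * real k" using pos[OF e3] by (simp add: field_simps)
  have "r e * real k * R \<le> real k * real (fact j)"
    using mult_left_mono[OF A, of "real k"] by (simp add: algebra_simps)
  also have "\<dots> \<le> 2 * R" using B C by linarith
  finally have "r e * real k * R \<le> 2 * R" .
  moreover have "2 * R < r e * real k * R" using mult_strict_right_mono[OF D Rpos] .
  ultimately show False by linarith
qed

theorem proposition4:
  shows "\<exists>w :: nat \<Rightarrow> nat. (\<forall>k. w k \<in> {0, 1, 2}) \<and>
           weak_abelian_periodic (identify 0 1 w) \<and>
           weak_abelian_periodic (identify 0 2 w) \<and>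
           weak_abelian_periodic (identify 1 2 w) \<and>
           \<not> weak_abelian_periodic w"
proof (intro exI[of _ ww] conjI)
  have v: "ww k = 0 \<or> ww k = 1 \<or> ww k = 2" for k using ww_vals[of k] by auto
  show "\<forall>k. ww k \<in> {0, 1, 2}" using v by auto
  show "weak_abelian_periodic (identify 0 1 ww)"
  proof (rule binary_wap[of _ 0 2])
    show "\<forall>k. identify 0 1 ww k = 0 \<or> identify 0 1 ww k = 2" using v unfolding identify_def by (metis (full_types))
    show "infinite {n. 2 * letter_count (identify 0 1 ww) 2 0 n = n}"
      using S_inf[of 2] lc_identify[of 2 0 1 ww] by simp
  qed simp
  show "weak_abelian_periodic (identify 0 2 ww)"
  proof (rule binary_wap[of _ 0 1])
    show "\<forall>k. identify 0 2 ww k = 0 \<or> identify 0 2 ww k = 1" using v unfolding identify_def by (metis (full_types))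
    show "infinite {n. 2 * letter_count (identify 0 2 ww) 1 0 n = n}"
      using S_inf[of 1] lc_identify[of 1 0 2 ww] by simp
  qed simp
  show "weak_abelian_periodic (identify 1 2 ww)"
  proof (rule binary_wap[of _ 1 0])
    show "\<forall>k. identify 1 2 ww k = 1 \<or> identify 1 2 ww k = 0" using v unfolding identify_def by (metis (full_types))
    show "infinite {n. 2 * letter_count (identify 1 2 ww) 0 0 n = n}"
      using S_inf[of 0] lc_identify[of 0 1 2 ww] by simp
  qed simp
  show "\<not> weak_abelian_periodic ww" by (rule ww_not_wap)
qed

end
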